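(* Suppose $a:[0,x_J]\times\mathcal T\to[0,\infty)$ is convex in its first argument and the reals $e^1_{j,n},e^2_{j,n},v_{j,n}$ ($0\le j\le J$, $1\le n\le N$), $d^1_{j,n},d^2_{j,n}$ ($1\le n\le N-1$) are feasible for $\mathbf L_H^{\mathcal X,\mathcal T}$ (with $a$ restricted to $\mathcal X\times\mathcal T$). Then the extended semi-static strategy described in the context super-replicates the American claim along all paths with $X_{t_n}\in[0,x_J]$ for $1\le n\le N$: for every $(y_1,\dots,y_N)\in[0,x_J]^N$ and every exercise time $\rho\in\mathcal T$, its terminal payoff satisfies $\mathcal G_T\ge a(y_{\mathcal N(\rho)},\rho)$, where $\mathcal N(\rho)=\min\{n:t_n\ge\rho\}$.
   Context: Fix $N\ge1$, $J\ge1$, times $0=t_0<t_1<\dots<t_N=T$, $\mathcal T=\{t_1,\dots,t_N\}$, strikes $0=x_0<x_1<\dots<x_J$, $\mathcal X=\{x_0,\dots,x_J\}$ and numbers $p_{j,n}$. $\mathbf L_H^{\mathcal X,\mathcal T}$ is the linear program: over reals $e^1_{j,n},e^2_{j,n},v_{j,n}$ ($1\le n\le N$) and $d^1_{j,n},d^2_{j,n}$ ($1\le n\le N-1$), with $e^1_{j,N}=e^2_{j,1}=0$, minimise $\sum_{j,n}(e^1_{j,n}+e^2_{j,n})p_{j,n}+\sum_jv_{j,N}p_{j,N}$ subject to $v_{j,n}\ge0$ and (i) $v_{j,n}\ge a(x_j,t_n)$; (ii) $e^1_{j,n}+e^2_{k,n+1}+(x_k-x_j)d^1_{j,n}\ge0$;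 (iii) $e^1_{j,n}+e^2_{k,n+1}+(x_k-x_j)d^2_{j,n}-v_{j,n}+v_{k,n+1}\ge0$ for $0\le j,k\le J$, $1\le n\le N-1$. Linear interpolation of $(h_j)_{0\le j\le J}$: $\bar h(x)=\frac{x_{j+1}-x}{x_{j+1}-x_j}h_j+\frac{x-x_j}{x_{j+1}-x_j}h_{j+1}$ for $x_j\le x\le x_{j+1}$. Write $\bar e^1_n,\bar e^2_n,\bar v_n$ for the linear interpolations of $(e^1_{j,n})_j$, $(e^2_{j,n})_j$, $(v_{j,n})_j$. Mixed interpolation: with $u^1_{j,n}=\frac{e^1_{j+1,n}-e^1_{j,n}}{x_{j+1}-x_j}$, $u^2_{j,n}=\frac{(e^1_{j+1,n}-v_{j+1,n})-(e^1_{j,n}-v_{j,n})}{x_{j+1}-x_j}$, set $\tilde d^\delta_n(x_j)=d^\delta_{j,n}$ and for $x\in(x_j,x_{j+1})$: $\tilde d^\delta_n(x)=d^\delta_{j,n}$ if $d^\delta_{j,n}\le u^\delta_{j,n}$; $=d^\delta_{j+1,n}$ if $d^\delta_{j,n}>u^\delta_{j,n}$ and $d^\delta_{j+1,n}\ge u^\delta_{j,n}$; $=u^\delta_{j,n}$ if $d^\delta_{j+1,n}<u^\delta_{j,n}<d^\delta_{j,n}$. The extended strategy holds European claims (portfolios of calls with strikes in $\mathcal X$) paying $\bar e^1_n(X_{t_n})+\bar e^2_n(X_{t_n})$ at $t_n$ for each $n$ and additionally $\bar v_N(X_{t_N})$ at $t_N$, and over $[t_n,t_{n+1}]$ holds $\tilde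 d^1_n(X_{t_n})$ shares if $n<\mathcal N(\rho)$ and $\tilde d^2_n(X_{t_n})$ shares if $n\ge\mathcal N(\rho)$. Its terminal payoff along $(y_1,\dots,y_N)$ with exercise at $\rho$ is $\mathcal G_T=\sum_{n=1}^N(\bar e^1_n(y_n)+\bar e^2_n(y_n))+\bar v_N(y_N)+\sum_{n=1}^{\mathcal N(\rho)-1}(y_{n+1}-y_n)\tilde d^1_n(y_n)+\sum_{n=\mathcal N(\rho)}^{N-1}(y_{n+1}-y_n)\tilde d^2_n(y_n)$. *)

theory Defs
  imports "HOL-Analysis.Analysis"
begin

text \<open>Strikes are given as x :: nat => real with x 0 = 0 < x 1 < ... < x J.
  A table h :: nat => real gives values h j at the strikes x j.\<close>

definition seg_idx :: "(nat \<Rightarrow> real) \<Rightarrow> nat \<Rightarrow> real \<Rightarrow> nat" where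
  "seg_idx x J y = (LEAST j. j < J \<and> x j \<le> y \<and> y \<le> x (Suc j))"

definition lin_interp :: "(nat \<Rightarrow> real) \<Rightarrow> nat \<Rightarrow> (nat \<Rightarrow> real) \<Rightarrow> real \<Rightarrow> real" where
  "lin_interp x J h y =
     (let j = seg_idx x J y in
        (x (Suc j) - y) / (x (Suc j) - x j) * h j + (y - x j) / (x (Suc j) - x j) * h (Suc j))"

definition mixed_interp ::
  "(nat \<Rightarrow> real) \<Rightarrow> nat \<Rightarrow> (nat \<Rightarrow> real) \<Rightarrow> (nat \<Rightarrow> real) \<Rightarrow> real \<Rightarrow> real" where
  "mixed_interp x J d u y =
     (if \<exists>j\<le>J. y = x j then d (LEAST j. j \<le> J \<and> y = x j)
      else (let j = seg_idx x J y in
              if d j \<le> u j then d j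
              else if u j \<le> d (Suc j) then d (Suc j)
              else u j))"

definition Nidx :: "(nat \<Rightarrow> real) \<Rightarrow> real \<Rightarrow> nat" where
  "Nidx t \<rho> = (LEAST n. 1 \<le> n \<and> \<rho> \<le> t n)"

text \<open>Feasibility for the linear program L_H^{X,T} (objective irrelevant to feasibility).
  Indexing: e1 j n etc.\<close>
definition LH_feasible ::
  "nat \<Rightarrow> nat \<Rightarrow> (nat \<Rightarrow> real) \<Rightarrow> (nat \<Rightarrow> real) \<Rightarrow> (real \<Rightarrow> real \<Rightarrow> real)
   \<Rightarrow> (nat \<Rightarrow> nat \<Rightarrow> real) \<Rightarrow> (nat \<Rightarrow> nat \<Rightarrow> real) \<Rightarrow> (nat \<Rightarrow> nat \<Rightarrow> real)
   \<Rightarrow> (nat \<Rightarrow> nat \<Rightarrow> real) \<Rightarrow> (nat \<Rightarrow> nat \<Rightarrow> real) \<Rightarrow> bool" where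
  "LH_feasible N J t x a e1 e2 v d1 d2 \<longleftrightarrow>
     (\<forall>j\<le>J. e1 j N = 0 \<and> e2 j 1 = 0) \<and>
     (\<forall>j\<le>J. \<forall>n\<in>{1..N}. v j n \<ge> 0 \<and> v j n \<ge> a (x j) (t n)) \<and>
     (\<forall>j\<le>J. \<forall>k\<le>J. \<forall>n\<in>{1..N-1}.
        e1 j n + e2 k (Suc n) + (x k - x j) * d1 j n \<ge> 0 \<and>
        e1 j n + e2 k (Suc n) + (x k - x j) * d2 j n - v j n + v k (Suc n) \<ge> 0)"

definition slope1 :: "(nat \<Rightarrow> real) \<Rightarrow> (nat \<Rightarrow> nat \<Rightarrow> real) \<Rightarrow> nat \<Rightarrow> nat \<Rightarrow> real" where
  "slope1 x e1 n j = (e1 (Suc j) n - e1 j n) / (x (Suc j) - x j)"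

definition slope2 :: "(nat \<Rightarrow> real) \<Rightarrow> (nat \<Rightarrow> nat \<Rightarrow> real) \<Rightarrow> (nat \<Rightarrow> nat \<Rightarrow> real)
   \<Rightarrow> nat \<Rightarrow> nat \<Rightarrow> real" where
  "slope2 x e1 v n j = ((e1 (Suc j) n - v (Suc j) n) - (e1 j n - v j n)) / (x (Suc j) - x j)"

definition payoff_GT ::
  "nat \<Rightarrow> nat \<Rightarrow> (nat \<Rightarrow> real) \<Rightarrow> (nat \<Rightarrow> real)
   \<Rightarrow> (nat \<Rightarrow> nat \<Rightarrow> real) \<Rightarrow> (nat \<Rightarrow> nat \<Rightarrow> real) \<Rightarrow> (nat \<Rightarrow> nat \<Rightarrow> real)
   \<Rightarrow> (nat \<Rightarrow> nat \<Rightarrow> real) \<Rightarrow> (nat \<Rightarrow> nat \<Rightarrow> real)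
   \<Rightarrow> (nat \<Rightarrow> real) \<Rightarrow> real \<Rightarrow> real" where
  "payoff_GT N J t x e1 e2 v d1 d2 y \<rho> =
     (\<Sum>n=1..N. lin_interp x J (\<lambda>j. e1 j n) (y n) + lin_interp x J (\<lambda>j. e2 j n) (y n))
     + lin_interp x J (\<lambda>j. v j N) (y N)
     + (\<Sum>n=1..<Nidx t \<rho>. (y (Suc n) - y n) *
          mixed_interp x J (\<lambda>j. d1 j n) (slope1 x e1 n) (y n))
     + (\<Sum>n=Nidx t \<rho>..<N. (y (Suc n) - y n) *
          mixed_interp x J (\<lambda>j. d2 j n) (slope2 x e1 v n) (y n))"

end

theory Submission
  imports Defs
begin

context
  fixes x :: "nat \<Rightarrow> real" and J :: nat
  assumes xmono: "\<And>j. j < J \<Longrightarrow> x j < x (Suc j)"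
begin

lemma xlt:
  shows "i < k \<Longrightarrow> k \<le> J \<Longrightarrow> x i < x k"
proof (induction k)
  case 0 then show ?case by simp
next
  case (Suc k)
  show ?case
  proof (cases "i < k")
    case True then have "x i < x k" using Suc by simp
    also have "x k < x (Suc k)" using xmono Suc by simp
    finally show ?thesis .
  next
    case False then have "i = k" using Suc by simp
    then show ?thesis using xmono Suc by simp
  qed
qed

lemma xle_iff:
  assumes "i \<le> J" "k \<le> J"
  shows "x i \<le> x k \<longleftrightarrow> i \<le> k"
  using xlt[of i k] xlt[of k i] assms
  by (metis linorder_not_le order_less_imp_le nat_neq_iff order_refl le_less)

lemma xeq_iff:
  assumes "i \<le> J" "k \<le> J"
  shows "x i = x k \<longleftrightarrow> i = k"
  using xle_iff[of i k] xle_iff[of k i] assms by auto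

lemma seg_exists:
  assumes y0: "x 0 \<le> y"
  shows "1 \<le> m \<Longrightarrow> m \<le> J \<Longrightarrow> y \<le> x m \<Longrightarrow> \<exists>j<m. x j \<le> y \<and> y \<le> x (Suc j)"
proof (induction m)
  case 0 then show ?case by simp
next
  case (Suc m)
  show ?case
  proof (cases "m \<ge> 1 \<and> y \<le> x m")
    case True then show ?thesis using Suc by (metis Suc_leD less_SucI)
  next
    case False
    then have "m = 0 \<or> x m < y" by auto
    then show ?thesis using Suc y0 by (metis lessI order_less_imp_le)
  qed
qed

lemma seg_idx_props:
  assumes J1: "J \<ge> 1" and y0: "x 0 \<le> y" and yJ: "y \<le> x J"
  shows "seg_idx x J y < J \<and> x (seg_idx x J y) \<le> y \<and> y \<le> x (Suc (seg_idx x J y))"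
proof -
  have "\<exists>j. j < J \<and> x j \<le> y \<and> y \<le> x (Suc j)"
    using seg_exists[OF y0 J1 order_refl yJ] by blast
  then show ?thesis unfolding seg_idx_def by (rule LeastI_ex)
qed

lemma lin_seg:
  assumes J1: "J \<ge> 1" and j: "j < J" and y1: "x j \<le> y" and y2: "y \<le> x (Suc j)"
  shows "lin_interp x J h y = (x (Suc j) - y) / (x (Suc j) - x j) * h j
            + (y - x j) / (x (Suc j) - x j) * h (Suc j)"
proof -
  define i where "i = seg_idx x J y"
  have x0j: "x 0 \<le> x j" using xle_iff[of 0 j] j by simp
  have xjJ: "x (Suc j) \<le> x J" using xle_iff[of "Suc j" J] j by simp
  have ip: "i < J" "x i \<le> y" "y \<le> x (Suc i)"
    using seg_idx_props[OF J1, of y] x0j y1 y2 xjJ unfolding i_def by auto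
  have "i \<le> j" unfolding i_def seg_idx_def by (rule Least_le) (use j y1 y2 in auto)
  show ?thesis
  proof (cases "i = j")
    case True then show ?thesis unfolding lin_interp_def i_def[symmetric] Let_def by simp
  next
    case False
    then have "Suc i \<le> j" using \<open>i \<le> j\<close> by simp
    then have "x (Suc i) \<le> x j" using xle_iff[of "Suc i" j] j by simp
    then have yeq: "y = x j" "x (Suc i) = x j" using ip y1 by auto
    then have sij: "Suc i = j" using xeq_iff[of "Suc i" j] j \<open>Suc i \<le> j\<close> by simp
    have d1: "x (Suc j) - x j \<noteq> 0" using xmono[OF j] by simp
    have d2: "x j - x i \<noteq> 0" using xmono[OF ip(1)] sij by simp
    show ?thesis unfolding lin_interp_def i_def[symmetric] Let_def
      using yeq sij d1 d2 by auto
  qed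
qed

lemma lin_knot:
  assumes J1: "J \<ge> 1" and k: "k \<le> J"
  shows "lin_interp x J h (x k) = h k"
proof (cases "k < J")
  case True
  have d1: "x (Suc k) - x k \<noteq> 0" using xmono[OF True] by simp
  show ?thesis using lin_seg[OF J1 True, of "x k" h] d1 xmono[OF True] by simp
next
  case False
  then have kJ: "k = J" using k by simp
  obtain j where j: "J = Suc j" using J1 by (cases J) auto
  have d1: "x (Suc j) - x j \<noteq> 0" using xmono[of j] j by simp
  show ?thesis using lin_seg[OF J1, of j "x k" h] d1 j kJ xmono[of j] by simp
qed


lemma lin_convex:
  assumes J1: "J \<ge> 1" and x0: "x 0 = 0"
    and cvx: "convex_on {0..x J} f"
    and hv: "\<And>j. j \<le> J \<Longrightarrow> h j \<ge> f (x j)"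
    and y: "y \<in> {0..x J}"
  shows "lin_interp x J h y \<ge> f y"
proof -
  define j where "j = seg_idx x J y"
  have jp: "j < J" "x j \<le> y" "y \<le> x (Suc j)"
    using seg_idx_props[OF J1, of y] y x0 unfolding j_def by auto
  define D where "D = x (Suc j) - x j"
  have D: "D > 0" using xmono[OF jp(1)] D_def by simp
  define s where "s = (y - x j) / D"
  have s: "0 \<le> s" "s \<le> 1" using jp D unfolding s_def D_def by (auto simp: field_simps)
  have ms: "1 - s = (x (Suc j) - y) / D" using D unfolding s_def D_def by (simp add: field_simps)
  have "(1 - s) * x j + s * x (Suc j) = ((x (Suc j) - y) * x j + (y - x j) * x (Suc j)) / D"
    by (subst ms) (simp add: s_def add_divide_distrib)
  also have "\<dots> = y * D / D" unfolding D_def by (simp add: algebra_simps)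
  also have "\<dots> = y" using D by simp
  finally have yeq: "(1 - s) *\<^sub>R x j + s *\<^sub>R x (Suc j) = y" by simp
  have xj: "x j \<in> {0..x J}" "x (Suc j) \<in> {0..x J}"
    using xle_iff[of 0 j] xle_iff[of j J] xle_iff[of 0 "Suc j"]
      xle_iff[of "Suc j" J] jp x0 by auto
  have "f y \<le> (1 - s) * f (x j) + s * f (x (Suc j))"
    using convex_onD[OF cvx s xj] yeq by simp
  also have "\<dots> \<le> (1 - s) * h j + s * h (Suc j)"
    using hv[of j] hv[of "Suc j"] jp s
    by (intro add_mono mult_left_mono) auto
  also have "\<dots> = lin_interp x J h y"
    using lin_seg[OF J1 jp, of h] ms unfolding s_def D_def by simp
  finally show ?thesis .
qed


lemma step1:
  fixes A B d :: "nat \<Rightarrow> real"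
  assumes J1: "J \<ge> 1"
    and C: "\<And>j k. j \<le> J \<Longrightarrow> k \<le> J \<Longrightarrow> A j + B k + (x k - x j) * d j \<ge> 0"
    and y0: "x 0 \<le> y" and yJ: "y \<le> x J" and k: "k \<le> J"
  shows "lin_interp x J A y + B k + (x k - y) *
           mixed_interp x J d (\<lambda>j. (A (Suc j) - A j) / (x (Suc j) - x j)) y \<ge> 0"
proof (cases "\<exists>j\<le>J. y = x j")
  case True
  then obtain j where j: "j \<le> J" "y = x j" by blast
  have L: "(LEAST i. i \<le> J \<and> y = x i) = j"
    by (rule Least_equality) (use j xeq_iff in auto)
  have M: "mixed_interp x J d (\<lambda>j. (A (Suc j) - A j) / (x (Suc j) - x j)) y = d j"
    unfolding mixed_interp_def using True L by simp
  show ?thesis using M lin_knot[OF J1 j(1), of A] j C[OF j(1) k] by simp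
next
  case False
  define j where "j = seg_idx x J y"
  have jp: "j < J" "x j \<le> y" "y \<le> x (Suc j)"
    using seg_idx_props[OF J1 y0 yJ] unfolding j_def by auto
  have ne: "y \<noteq> x j" "y \<noteq> x (Suc j)"
    using False Suc_leI[OF jp(1)] less_imp_le[OF jp(1)] by blast+
  have jp2: "x j < y" "y < x (Suc j)" using ne jp by auto
  define D where "D = x (Suc j) - x j"
  have D: "D > 0" using xmono[OF jp(1)] D_def by simp
  define u where "u = (A (Suc j) - A j) / D"
  have Asuc: "A (Suc j) = A j + D * u" using D unfolding u_def by simp
  have LA: "lin_interp x J A y = A j + (y - x j) * u"
  proof -
    have "lin_interp x J A y = (x (Suc j) - y) / D * A j + (y - x j) / D * A (Suc j)"
      using lin_seg[OF J1 jp, of A] unfolding D_def by simp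
    also have "\<dots> = ((x (Suc j) - y) * A j + (y - x j) * A (Suc j)) / D"
      by (simp add: add_divide_distrib)
    also have "\<dots> = ((x (Suc j) - y + (y - x j)) * A j + (y - x j) * (D * u)) / D"
      unfolding Asuc by (simp add: algebra_simps)
    also have "\<dots> = (D * A j + D * ((y - x j) * u)) / D"
      unfolding D_def by (simp add: algebra_simps)
    also have "\<dots> = A j + (y - x j) * u" using D by (simp add: add_divide_distrib)
    finally show ?thesis .
  qed
  have M: "mixed_interp x J d (\<lambda>j. (A (Suc j) - A j) / (x (Suc j) - x j)) y =
      (if d j \<le> u then d j else if u \<le> d (Suc j) then d (Suc j) else u)"
    unfolding mixed_interp_def if_not_P[OF False] by (simp add: Let_def j_def u_def D_def)
  have Cj: "A j + B k + (x k - x j) * d j \<ge> 0" using C jp k by simp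
  have Cj1: "A (Suc j) + B k + (x k - x (Suc j)) * d (Suc j) \<ge> 0" using C jp k by simp
  show ?thesis
  proof (cases "d j \<le> u")
    case True
    have "(y - x j) * (u - d j) \<ge> 0" using True jp by simp
    moreover have "A j + (y - x j) * u + B k + (x k - y) * d j =
        (A j + B k + (x k - x j) * d j) + (y - x j) * (u - d j)" by (simp add: algebra_simps)
    ultimately show ?thesis using M True LA Cj by simp
  next
    case F1: False
    show ?thesis
    proof (cases "u \<le> d (Suc j)")
      case True
      have "(x (Suc j) - y) * (d (Suc j) - u) \<ge> 0" using True jp by simp
      moreover have "A j + (y - x j) * u + B k + (x k - y) * d (Suc j) =
          (A (Suc j) + B k + (x k - x (Suc j)) * d (Suc j)) + (x (Suc j) - y) * (d (Suc j) - u)"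
        unfolding Asuc D_def by (simp add: algebra_simps)
      ultimately show ?thesis using M True F1 LA Cj1 by simp
    next
      case F2: False
      have e: "A j + (y - x j) * u + B k + (x k - y) * u = A j + B k + (x k - x j) * u"
        by (simp add: algebra_simps)
      show ?thesis
      proof (cases "k \<le> j")
        case True
        then have "x k \<le> x j" using xle_iff[of k j] jp by simp
        then have "(x k - x j) * (u - d j) \<ge> 0" using F1 by (simp add: mult_nonpos_nonpos)
        then have "A j + B k + (x k - x j) * u \<ge> 0" using Cj by (simp add: algebra_simps)
        then show ?thesis using M F1 F2 LA e by simp
      next
        case False
        then have "x (Suc j) \<le> x k" using xle_iff[of "Suc j" k] k by simp
        then have "(x k - x (Suc j)) * (u - d (Suc j)) \<ge> 0" using F2 by simp
        moreover have "A j + B k + (x k - x j) * u =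
            (A (Suc j) + B k + (x k - x (Suc j)) * d (Suc j)) + (x k - x (Suc j)) * (u - d (Suc j))"
          unfolding Asuc D_def by (simp add: algebra_simps)
        ultimately show ?thesis using M F1 F2 LA e Cj1 by simp
      qed
    qed
  qed
qed

lemma step2:
  fixes A B d :: "nat \<Rightarrow> real"
  assumes J1: "J \<ge> 1"
    and C: "\<And>j k. j \<le> J \<Longrightarrow> k \<le> J \<Longrightarrow> A j + B k + (x k - x j) * d j \<ge> 0"
    and y0: "x 0 \<le> y" and yJ: "y \<le> x J" and z0: "x 0 \<le> z" and zJ: "z \<le> x J"
  shows "lin_interp x J A y + lin_interp x J B z + (z - y) *
           mixed_interp x J d (\<lambda>j. (A (Suc j) - A j) / (x (Suc j) - x j)) y \<ge> 0"
proof -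
  define Dm where "Dm = mixed_interp x J d (\<lambda>j. (A (Suc j) - A j) / (x (Suc j) - x j)) y"
  define LA where "LA = lin_interp x J A y"
  define P where "P k = LA + B k + (x k - y) * Dm" for k
  have P: "\<And>k. k \<le> J \<Longrightarrow> P k \<ge> 0" unfolding P_def LA_def Dm_def
    using step1[OF J1 C y0 yJ] by blast
  define i where "i = seg_idx x J z"
  have ip: "i < J" "x i \<le> z" "z \<le> x (Suc i)"
    using seg_idx_props[OF J1 z0 zJ] unfolding i_def by auto
  define D where "D = x (Suc i) - x i"
  have D: "D > 0" using xmono[OF ip(1)] D_def by simp
  define mu where "mu = (x (Suc i) - z) / D"
  define nu where "nu = (z - x i) / D"
  have mn: "mu \<ge> 0" "nu \<ge> 0" using ip D unfolding mu_def nu_def by auto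
  have s1: "mu + nu = 1" using D unfolding mu_def nu_def D_def by (simp add: add_divide_distrib[symmetric])
  have s2: "mu * x i + nu * x (Suc i) = z"
  proof -
    have "mu * x i + nu * x (Suc i) = ((x (Suc i) - z) * x i + (z - x i) * x (Suc i)) / D"
      unfolding mu_def nu_def by (simp add: add_divide_distrib)
    also have "\<dots> = z * D / D" unfolding D_def by (simp add: algebra_simps)
    also have "\<dots> = z" using D by simp
    finally show ?thesis .
  qed
  have LB: "lin_interp x J B z = mu * B i + nu * B (Suc i)"
    using lin_seg[OF J1 ip, of B] unfolding mu_def nu_def D_def by simp
  have "mu * P i + nu * P (Suc i) =
      (mu + nu) * LA + (mu * B i + nu * B (Suc i)) + ((mu * x i + nu * x (Suc i)) - (mu + nu) * y) * Dm"
    unfolding P_def by (simp add: algebra_simps)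
  also have "\<dots> = LA + lin_interp x J B z + (z - y) * Dm" using s1 s2 LB by simp
  finally have eq: "mu * P i + nu * P (Suc i) = LA + lin_interp x J B z + (z - y) * Dm" .
  have "mu * P i + nu * P (Suc i) \<ge> 0" using P[of i] P[of "Suc i"] ip mn by simp
  then show ?thesis using eq unfolding LA_def Dm_def by simp
qed
end

lemma lin_add: "lin_interp x J (\<lambda>j. f j + g j) y = lin_interp x J f y + lin_interp x J g y"
  unfolding lin_interp_def Let_def by (simp add: distrib_left right_diff_distrib)

lemma lin_diff: "lin_interp x J (\<lambda>j. f j - g j) y = lin_interp x J f y - lin_interp x J g y"
  unfolding lin_interp_def Let_def by (simp add: distrib_left right_diff_distrib)

lemma lin_zero: "lin_interp x J (\<lambda>j. 0) y = 0"
  unfolding lin_interp_def Let_def by simp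


lemma sum_shift1: "N \<ge> 1 \<Longrightarrow> sum g {1..N} = g 1 + (\<Sum>n=1..<N. g (Suc n))"
  for g :: "nat \<Rightarrow> real"
proof (induction N)
  case 0 then show ?case by simp
next
  case (Suc N)
  show ?case
  proof (cases "N = 0")
    case True then show ?thesis by simp
  next
    case False
    then have "sum g {1..Suc N} = sum g {1..N} + g (Suc N)" by simp
    also have "\<dots> = g 1 + (\<Sum>n=1..<N. g (Suc n)) + g (Suc N)" using Suc False by simp
    also have "\<dots> = g 1 + (\<Sum>n=1..<Suc N. g (Suc n))" using False by simp
    finally show ?thesis .
  qed
qed

lemma sum_drop_last: "N \<ge> 1 \<Longrightarrow> sum g {1..N} = (\<Sum>n=1..<N. g n) + g N"
  for g :: "nat \<Rightarrow> real"
  by (metis Suc_le_mono atLeastLessThanSuc_atLeastAtMost le_SucI sum.atLeastLessThan_Suc)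

theorem mainTheorem8:
  fixes N J :: nat and t x :: "nat \<Rightarrow> real" and a :: "real \<Rightarrow> real \<Rightarrow> real"
    and e1 e2 v d1 d2 :: "nat \<Rightarrow> nat \<Rightarrow> real"
  assumes N1: "N \<ge> 1" and J1: "J \<ge> 1"
    and t0: "t 0 = 0" and tmono: "\<And>n. n < N \<Longrightarrow> t n < t (Suc n)"
    and x0: "x 0 = 0" and xmono: "\<And>j. j < J \<Longrightarrow> x j < x (Suc j)"
    and a_nonneg: "\<And>z n. z \<in> {0..x J} \<Longrightarrow> n \<in> {1..N} \<Longrightarrow> a z (t n) \<ge> 0"
    and a_convex: "\<And>n. n \<in> {1..N} \<Longrightarrow> convex_on {0..x J} (\<lambda>z. a z (t n))"
    and feas: "LH_feasible N J t x a e1 e2 v d1 d2"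
    and y: "\<And>n. n \<in> {1..N} \<Longrightarrow> y n \<in> {0..x J}"
    and rho: "\<rho> \<in> t ` {1..N}"
  shows "payoff_GT N J t x e1 e2 v d1 d2 y \<rho> \<ge> a (y (Nidx t \<rho>)) \<rho>"
proof -
  obtain n0 where n0: "n0 \<in> {1..N}" "\<rho> = t n0" using rho by blast
  define m where "m = Nidx t \<rho>"
  have mle: "m \<le> n0" unfolding m_def Nidx_def by (rule Least_le) (use n0 in auto)
  have mp: "1 \<le> m \<and> \<rho> \<le> t m" unfolding m_def Nidx_def by (rule LeastI[of _ n0]) (use n0 in auto)
  have mn0: "m = n0"
  proof (rule ccontr)
    assume "m \<noteq> n0"
    then have "m < n0" using mle by simp
    then have "t m < t n0" using xlt[where x=t and J=N, OF tmono] n0 by auto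
    then show False using mp n0 by simp
  qed
  have m1: "1 \<le> m" "m \<le> N" using mn0 n0 by auto
  have rhom: "\<rho> = t m" using mn0 n0 by simp
  define E1 where "E1 n = lin_interp x J (\<lambda>j. e1 j n) (y n)" for n
  define E2 where "E2 n = lin_interp x J (\<lambda>j. e2 j n) (y n)" for n
  define V where "V n = lin_interp x J (\<lambda>j. v j n) (y n)" for n
  define G1 where "G1 n = (y (Suc n) - y n) * mixed_interp x J (\<lambda>j. d1 j n) (slope1 x e1 n) (y n)" for n
  define G2 where "G2 n = (y (Suc n) - y n) * mixed_interp x J (\<lambda>j. d2 j n) (slope2 x e1 v n) (y n)" for n
  have pay: "payoff_GT N J t x e1 e2 v d1 d2 y \<rho> =
      (\<Sum>n=1..N. E1 n + E2 n) + V N + (\<Sum>n=1..<m. G1 n) + (\<Sum>n=m..<N. G2 n)"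
    unfolding payoff_GT_def E1_def E2_def V_def G1_def G2_def m_def by simp
  have fe: "\<And>j. j \<le> J \<Longrightarrow> e1 j N = 0 \<and> e2 j 1 = 0" using feas unfolding LH_feasible_def by blast
  have fv: "\<And>j n. j \<le> J \<Longrightarrow> n \<in> {1..N} \<Longrightarrow> v j n \<ge> a (x j) (t n)"
    using feas unfolding LH_feasible_def by blast
  have fc: "\<And>j k n. j \<le> J \<Longrightarrow> k \<le> J \<Longrightarrow> n \<in> {1..N-1} \<Longrightarrow>
        e1 j n + e2 k (Suc n) + (x k - x j) * d1 j n \<ge> 0 \<and>
        e1 j n + e2 k (Suc n) + (x k - x j) * d2 j n - v j n + v k (Suc n) \<ge> 0"
    using feas unfolding LH_feasible_def by blast
  have E1N: "E1 N = 0"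
  proof -
    have "lin_interp x J (\<lambda>j. e1 j N) (y N) = lin_interp x J (\<lambda>j. 0) (y N)"
      unfolding lin_interp_def Let_def using fe seg_idx_props[where x=x and J=J, OF xmono J1, of "y N"] y[of N] N1 x0
      by auto
    then show ?thesis unfolding E1_def lin_zero .
  qed
  have E21: "E2 1 = 0"
  proof -
    have "lin_interp x J (\<lambda>j. e2 j 1) (y 1) = lin_interp x J (\<lambda>j. 0) (y 1)"
      unfolding lin_interp_def Let_def using fe seg_idx_props[where x=x and J=J, OF xmono J1, of "y 1"] y[of 1] N1 x0
      by auto
    then show ?thesis unfolding E2_def lin_zero .
  qed
  define F where "F n = E1 n + E2 (Suc n)" for n
  have S: "(\<Sum>n=1..N. E1 n + E2 n) = (\<Sum>n=1..<N. F n)"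
    using sum_shift1[OF N1, of E2] sum_drop_last[OF N1, of E1] E1N E21
    unfolding F_def by (simp add: sum.distrib)
  have yr: "\<And>n. n \<in> {1..N} \<Longrightarrow> x 0 \<le> y n \<and> y n \<le> x J" using y x0 by auto
  have ii: "\<And>n. n \<in> {1..<N} \<Longrightarrow> F n + G1 n \<ge> 0"
  proof -
    fix n assume n: "n \<in> {1..<N}"
    have sl: "slope1 x e1 n = (\<lambda>j. (e1 (Suc j) n - e1 j n) / (x (Suc j) - x j))"
      by (simp add: slope1_def fun_eq_iff)
    have "lin_interp x J (\<lambda>j. e1 j n) (y n) + lin_interp x J (\<lambda>k. e2 k (Suc n)) (y (Suc n)) +
        (y (Suc n) - y n) * mixed_interp x J (\<lambda>j. d1 j n)
          (\<lambda>j. (e1 (Suc j) n - e1 j n) / (x (Suc j) - x j)) (y n) \<ge> 0"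
      apply (rule step2[where x=x and J=J, OF xmono J1])
      using fc n yr[of n] yr[of "Suc n"] by auto
    then show "F n + G1 n \<ge> 0" unfolding F_def G1_def E1_def E2_def sl by simp
  qed
  have iii: "\<And>n. n \<in> {1..<N} \<Longrightarrow> F n + G2 n \<ge> V n - V (Suc n)"
  proof -
    fix n assume n: "n \<in> {1..<N}"
    have sl: "slope2 x e1 v n = (\<lambda>j. ((e1 (Suc j) n - v (Suc j) n) - (e1 j n - v j n)) / (x (Suc j) - x j))"
      by (simp add: slope2_def fun_eq_iff)
    have "lin_interp x J (\<lambda>j. e1 j n - v j n) (y n) + lin_interp x J (\<lambda>k. e2 k (Suc n) + v k (Suc n)) (y (Suc n)) +
        (y (Suc n) - y n) * mixed_interp x J (\<lambda>j. d2 j n)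
          (\<lambda>j. ((e1 (Suc j) n - v (Suc j) n) - (e1 j n - v j n)) / (x (Suc j) - x j)) (y n) \<ge> 0"
    proof (rule step2[where x=x and J=J, OF xmono J1])
      fix j k assume jk: "j \<le> J" "k \<le> J"
      have "e1 j n + e2 k (Suc n) + (x k - x j) * d2 j n - v j n + v k (Suc n) \<ge> 0"
        using fc[OF jk] n by auto
      then show "0 \<le> e1 j n - v j n + (e2 k (Suc n) + v k (Suc n)) + (x k - x j) * d2 j n" by simp
    qed (use yr[of n] yr[of "Suc n"] n in auto)
    then show "F n + G2 n \<ge> V n - V (Suc n)"
      unfolding F_def G2_def E1_def E2_def V_def sl lin_add lin_diff by simp
  qed
  have P1: "(\<Sum>n=1..<m. F n + G1 n) \<ge> 0"
    by (rule sum_nonneg) (use ii m1 in auto)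
  have P2: "(\<Sum>n=m..<N. F n + G2 n) \<ge> (\<Sum>n=m..<N. V n - V (Suc n))"
    by (rule sum_mono) (use iii m1 in auto)
  have tel: "(\<Sum>n=m..<N. V n - V (Suc n)) = V m - V N"
    using sum_Suc_diff'[OF m1(2), of V] by (simp add: sum_subtractf)
  have split: "(\<Sum>n=1..<N. F n) = (\<Sum>n=1..<m. F n) + (\<Sum>n=m..<N. F n)"
    using sum.atLeastLessThan_concat[OF m1, of F] by simp
  have pe: "payoff_GT N J t x e1 e2 v d1 d2 y \<rho> =
      ((\<Sum>n=1..<m. F n) + (\<Sum>n=m..<N. F n)) + V N + (\<Sum>n=1..<m. G1 n) + (\<Sum>n=m..<N. G2 n)"
    by (simp only: pay S split)
  have d1: "(\<Sum>n=1..<m. F n + G1 n) = (\<Sum>n=1..<m. F n) + (\<Sum>n=1..<m. G1 n)" by (rule sum.distrib)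
  have d2: "(\<Sum>n=m..<N. F n + G2 n) = (\<Sum>n=m..<N. F n) + (\<Sum>n=m..<N. G2 n)" by (rule sum.distrib)
  have G: "payoff_GT N J t x e1 e2 v d1 d2 y \<rho> \<ge> V m" using pe d1 d2 P1 P2 tel by linarith
  have "V m \<ge> a (y m) (t m)"
    unfolding V_def
    apply (rule lin_convex[where x=x and J=J, OF xmono J1 x0 a_convex])
    using m1 fv y by auto
  then have "a (y m) \<rho> \<le> V m" using rhom by simp
  then show ?thesis using G unfolding m_def[symmetric] by linarith
qed

end
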